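(* Let $R>0$. For a Ptolemy interval $([0,1],d)$ with $d(0,1)=R$ consider the curve $t\mapsto p_t=(d(t,1),d(t,0))\in Q$, $t\in[0,1]$. This assignment induces a one-to-one correspondence between isometry classes of Ptolemy intervals $([0,1],d)$ with $d(0,1)=R$ and convex curves in $T(e_R^1,e_R^2)$ from $e_R^1$ to $e_R^2$ (considered as subsets of $Q$), modulo reflection at the bisecting line $\{(a,a):a\ge0\}$ of $Q$.
   Context: A Ptolemy interval (Ptolemy segment) is a compact interval with a metric $d$ inducing its standard topology such that $d(x_1,x_3)d(x_2,x_4)=d(x_1,x_2)d(x_3,x_4)+d(x_1,x_4)d(x_3,x_2)$ whenever $x_1,x_2,x_3,x_4$ lie in this order on the interval. Let $Q=[0,\infty)\times[0,\infty)\subset\mathbb{R}^2$, $e_R^1=(R,0)$, $e_R^2=(0,R)$, and let $\arg(p)$ denote the polar angle of $p\in Q\setminus\{0\}$. For $u,w\in Q$ with $\arg(u)<\arg(w)$, $T(u,w)=\{\lambda u+\mu w\in Q:\ \lambda,\mu\ge0,\ \lambda+\mu\ge1,\ \lambda+1\ge\mu,\ \mu+1\ge\lambda\}$. A curve $t\mapsto p_t$ in $Q$, $t\in[0,1]$, from $e_R^1$ to $e_R^2$ is convex if it is continuous, $\arg(p_t)$ is strictly increasing in $t$, and the bounded component of $Q\setminus\{p_t:t\in[0,1]\}$ is convex. *)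

theory Defs
  imports "HOL-Analysis.Analysis"
begin

text \<open>A metric d on the unit interval [0,1], only its values on [0,1]x[0,1] matter;
  we restrict it to [0,1] (value 0 outside) so that the library locale applies.\<close>
definition unit_restrict :: "(real \<Rightarrow> real \<Rightarrow> real) \<Rightarrow> real \<Rightarrow> real \<Rightarrow> real" where
  "unit_restrict d x y = (if x \<in> {0..1} \<and> y \<in> {0..1} then d x y else 0)"

definition ptolemy_interval :: "(real \<Rightarrow> real \<Rightarrow> real) \<Rightarrow> bool" where
  "ptolemy_interval d \<longleftrightarrow>
     Metric_space {0..1} (unit_restrict d) \<and>
     Metric_space.mtopology {0..1} (unit_restrict d) = subtopology euclidean {0..1} \<and>
     (\<forall>x1 x2 x3 x4. 0 \<le> x1 \<and> x1 \<le> x2 \<and> x2 \<le> x3 \<and> x3 \<le> x4 \<and> x4 \<le> 1 \<longrightarrow>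
        d x1 x3 * d x2 x4 = d x1 x2 * d x3 x4 + d x1 x4 * d x3 x2)"

definition isometric_intervals :: "(real \<Rightarrow> real \<Rightarrow> real) \<Rightarrow> (real \<Rightarrow> real \<Rightarrow> real) \<Rightarrow> bool" where
  "isometric_intervals d d' \<longleftrightarrow>
     (\<exists>f. bij_betw f {0..1} {0..1} \<and> (\<forall>x\<in>{0..1}. \<forall>y\<in>{0..1}. d' (f x) (f y) = d x y))"

definition quadrant :: "(real \<times> real) set" where
  "quadrant = {p. 0 \<le> fst p \<and> 0 \<le> snd p}"

definition e1 :: "real \<Rightarrow> real \<times> real" where "e1 R = (R, 0)"
definition e2 :: "real \<Rightarrow> real \<times> real" where "e2 R = (0, R)"

definition parg :: "real \<times> real \<Rightarrow> real" where
  "parg p = Arg (Complex (fst p) (snd p))"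

definition Tset :: "real \<times> real \<Rightarrow> real \<times> real \<Rightarrow> (real \<times> real) set" where
  "Tset u w = {p. p \<in> quadrant \<and> (\<exists>a b. p = a *\<^sub>R u + b *\<^sub>R w \<and> 0 \<le> a \<and> 0 \<le> b \<and>
        a + b \<ge> 1 \<and> a + 1 \<ge> b \<and> b + 1 \<ge> a)}"

definition convex_curve :: "real \<Rightarrow> (real \<Rightarrow> real \<times> real) \<Rightarrow> bool" where
  "convex_curve R c \<longleftrightarrow>
     continuous_on {0..1} c \<and> c ` {0..1} \<subseteq> quadrant - {0} \<and>
     c 0 = e1 R \<and> c 1 = e2 R \<and>
     strict_mono_on {0..1} (\<lambda>t. parg (c t)) \<and>
     (\<forall>C\<in>components (quadrant - c ` {0..1}). bounded C \<longrightarrow> convex C)"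

definition swap_refl :: "real \<times> real \<Rightarrow> real \<times> real" where
  "swap_refl p = (snd p, fst p)"

definition eq_mod_refl :: "(real \<times> real) set \<Rightarrow> (real \<times> real) set \<Rightarrow> bool" where
  "eq_mod_refl A B \<longleftrightarrow> A = B \<or> A = swap_refl ` B"

definition ptolemy_curve :: "(real \<Rightarrow> real \<Rightarrow> real) \<Rightarrow> real \<Rightarrow> real \<times> real" where
  "ptolemy_curve d t = (d t 1, d t 0)"

end

theory Submission imports Defs begin



definition det2 :: "real\<times>real \<Rightarrow> real\<times>real \<Rightarrow> real" where
  "det2 p q = fst p * snd q - snd p * fst q"

lemma parg_range:
  assumes "p \<in> quadrant"
  shows "0 \<le> parg p \<and> parg p \<le> pi/2"
proof -
  have "0 \<le> Arg (Complex (fst p) (snd p))" using assms by (simp add: Arg_less_0 quadrant_def)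
  moreover have "\<bar>Arg (Complex (fst p) (snd p))\<bar> \<le> pi/2"
    using assms Arg_Re_nonneg[of "Complex (fst p) (snd p)"] by (simp add: quadrant_def)
  ultimately show ?thesis by (simp add: parg_def)
qed

lemma det2_parg:
  "det2 a b = norm a * norm b * sin (parg b - parg a)"
proof -
  let ?za = "Complex (fst a) (snd a)" and ?zb = "Complex (fst b) (snd b)"
  have na: "norm a = cmod ?za" and nb: "norm b = cmod ?zb"
    by (simp_all add: norm_prod_def cmod_def)
  have a1: "fst a = cmod ?za * cos (parg a)" and a2: "snd a = cmod ?za * sin (parg a)"
    using arg_cong[OF rcis_cmod_Arg[of ?za], of Re] arg_cong[OF rcis_cmod_Arg[of ?za], of Im]
    unfolding parg_def by (simp_all only: Re_rcis Im_rcis complex.sel)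
  have b1: "fst b = cmod ?zb * cos (parg b)" and b2: "snd b = cmod ?zb * sin (parg b)"
    using arg_cong[OF rcis_cmod_Arg[of ?zb], of Re] arg_cong[OF rcis_cmod_Arg[of ?zb], of Im]
    unfolding parg_def by (simp_all only: Re_rcis Im_rcis complex.sel)
  show ?thesis unfolding det2_def na nb
    by (subst a1, subst a2, subst b1, subst b2) (simp add: sin_diff algebra_simps)
qed

lemma det2_pos_iff:
  assumes "a \<in> quadrant - {0}" "b \<in> quadrant - {0}"
  shows "det2 a b > 0 \<longleftrightarrow> parg a < parg b"
proof -
  have ra: "0 \<le> parg a \<and> parg a \<le> pi/2" and rb: "0 \<le> parg b \<and> parg b \<le> pi/2"
    using assms parg_range by auto
  have n: "norm a > 0" "norm b > 0" using assms by auto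
  have "sin (parg b - parg a) > 0 \<longleftrightarrow> parg a < parg b"
  proof
    assume "parg a < parg b" then show "sin (parg b - parg a) > 0"
      using ra rb by (intro sin_gt_zero) auto
  next
    assume s: "sin (parg b - parg a) > 0"
    show "parg a < parg b"
    proof (rule ccontr)
      assume "\<not> parg a < parg b"
      then have "sin (parg a - parg b) \<ge> 0" using ra rb by (intro sin_ge_zero) auto
      then show False using s by (simp add: sin_diff mult.commute)
    qed
  qed
  moreover have "det2 a b > 0 \<longleftrightarrow> sin (parg b - parg a) > 0"
    unfolding det2_parg
  proof
    assume "0 < norm a * norm b * sin (parg b - parg a)"
    then show "0 < sin (parg b - parg a)" using n zero_less_mult_pos[of "norm a * norm b" "sin (parg b - parg a)"] by simp
  next
    assume "0 < sin (parg b - parg a)"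
    then show "0 < norm a * norm b * sin (parg b - parg a)" using n by simp
  qed
  ultimately show ?thesis by blast
qed



definition good_curve :: "real \<Rightarrow> (real \<Rightarrow> real \<times> real) \<Rightarrow> bool" where
  "good_curve R c \<longleftrightarrow> R > 0 \<and> continuous_on {0..1} c \<and> c ` {0..1} \<subseteq> quadrant - {0} \<and>
     c 0 = (R, 0) \<and> c 1 = (0, R) \<and> (\<forall>s t. 0 \<le> s \<longrightarrow> s < t \<longrightarrow> t \<le> 1 \<longrightarrow> det2 (c s) (c t) > 0)"

lemma det2_swap: "det2 b a = - det2 a b" by (simp add: det2_def)
lemma det2_self[simp]: "det2 a a = 0" by (simp add: det2_def)
lemma det2_scaleR_right[simp]: "det2 a (r *\<^sub>R b) = r * det2 a b" by (simp add: det2_def algebra_simps)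
lemma det2_scaleR_left[simp]: "det2 (r *\<^sub>R a) b = r * det2 a b" by (simp add: det2_def algebra_simps)
lemma det2_add_right: "det2 a (b + b') = det2 a b + det2 a b'" by (simp add: det2_def algebra_simps)
lemma det2_add_left: "det2 (a + a') b = det2 a b + det2 a' b" by (simp add: det2_def algebra_simps)

lemma quadrant_scaleR: "p \<in> quadrant \<Longrightarrow> 0 \<le> r \<Longrightarrow> r *\<^sub>R p \<in> quadrant"
  by (simp add: quadrant_def)

lemma quadrant_add: "p \<in> quadrant \<Longrightarrow> q \<in> quadrant \<Longrightarrow> p + q \<in> quadrant"
  by (simp add: quadrant_def)

lemma parallel_quadrant:
  assumes "a \<in> quadrant - {0}" "b \<in> quadrant - {0}" "det2 a b = 0"
  shows "\<exists>\<rho>>0. b = \<rho> *\<^sub>R a"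
proof (cases "fst a > 0")
  case True
  define \<rho> where "\<rho> = fst b / fst a"
  have e1: "fst b = \<rho> * fst a" using True by (simp add: \<rho>_def)
  have e2: "snd b = \<rho> * snd a" using assms(3) True unfolding det2_def \<rho>_def
    by (simp add: field_simps)
  have "\<rho> \<ge> 0" using assms True by (simp add: \<rho>_def quadrant_def)
  moreover have "\<rho> \<noteq> 0" using e1 e2 assms(2) by (auto simp: prod_eq_iff)
  ultimately show ?thesis using e1 e2 by (intro exI[of _ \<rho>]) (auto simp: prod_eq_iff)
next
  case False
  then have a1: "fst a = 0" using assms by (simp add: quadrant_def)
  then have a2: "snd a > 0" using assms by (auto simp: quadrant_def prod_eq_iff)
  then have b1: "fst b = 0" using assms(3) a1 by (simp add: det2_def)
  define \<rho> where "\<rho> = snd b / snd a"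
  have e2: "snd b = \<rho> * snd a" using a2 by (simp add: \<rho>_def)
  have "\<rho> \<ge> 0" using assms a2 by (simp add: \<rho>_def quadrant_def)
  moreover have "\<rho> \<noteq> 0" using e2 b1 assms(2) by (auto simp: prod_eq_iff)
  ultimately show ?thesis using e2 a1 b1 by (intro exI[of _ \<rho>]) (auto simp: prod_eq_iff)
qed

context
  fixes R c
  assumes gc: "good_curve R c"
begin

lemma gc_R: "R > 0" using gc by (simp add: good_curve_def)
lemma gc_cont: "continuous_on {0..1} c" using gc by (simp add: good_curve_def)
lemma gc_Q: "t \<in> {0..1} \<Longrightarrow> c t \<in> quadrant - {0}" using gc unfolding good_curve_def by blast
lemma gc_0: "c 0 = (R,0)" using gc by (simp add: good_curve_def)
lemma gc_1: "c 1 = (0,R)" using gc by (simp add: good_curve_def)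
lemma gc_det: "0 \<le> s \<Longrightarrow> s < t \<Longrightarrow> t \<le> 1 \<Longrightarrow> det2 (c s) (c t) > 0"
  using gc by (simp add: good_curve_def)

lemma gc_det_nonneg: "0 \<le> s \<Longrightarrow> s \<le> t \<Longrightarrow> t \<le> 1 \<Longrightarrow> det2 (c s) (c t) \<ge> 0"
  using gc_det[of s t] by (cases "s = t") auto

lemma gc_det_nonneg_iff: "s \<in> {0..1} \<Longrightarrow> t \<in> {0..1} \<Longrightarrow> det2 (c s) (c t) \<ge> 0 \<longleftrightarrow> s \<le> t"
  using gc_det_nonneg[of s t] gc_det[of t s] det2_swap[of "c s" "c t"] by force

lemma gc_det_zero: "s \<in> {0..1} \<Longrightarrow> t \<in> {0..1} \<Longrightarrow> det2 (c s) (c t) = 0 \<Longrightarrow> s = t"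
  using gc_det[of s t] gc_det[of t s] det2_swap[of "c s" "c t"] by (cases s t rule: linorder_cases) auto

lemma gc_repr:
  assumes "x \<in> quadrant - {0}"
  shows "\<exists>u\<in>{0..1}. \<exists>\<rho>>0. x = \<rho> *\<^sub>R c u"
proof -
  have cont: "continuous_on {0..1} (\<lambda>t. det2 (c t) x)"
    unfolding det2_def using gc_cont by (intro continuous_intros) auto
  have "det2 (c 1) x \<le> 0" "0 \<le> det2 (c 0) x"
    using assms gc_R by (auto simp: gc_0 gc_1 det2_def quadrant_def)
  from IVT2'[of "\<lambda>t. det2 (c t) x" 1 0 0, OF this _ cont]
  obtain u where u: "0 \<le> u" "u \<le> 1" "det2 (c u) x = 0" by auto
  from parallel_quadrant[OF gc_Q[of u] assms u(3)] u show ?thesis by auto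
qed

lemma gc_uniq:
  assumes "\<rho> > 0" "\<rho>' > 0" "u \<in> {0..1}" "u' \<in> {0..1}" "\<rho> *\<^sub>R c u = \<rho>' *\<^sub>R c u'"
  shows "u = u' \<and> \<rho> = \<rho>'"
proof -
  have "det2 (\<rho> *\<^sub>R c u) (\<rho> *\<^sub>R c u) = 0" by simp
  then have "\<rho> * (\<rho>' * det2 (c u) (c u')) = 0" using assms(5) by (metis det2_scaleR_left det2_scaleR_right)
  then have "det2 (c u) (c u') = 0" using assms by simp
  then have uu: "u = u'" using gc_det_zero assms by blast
  have "c u \<noteq> 0" using gc_Q assms by auto
  then show ?thesis using uu assms(5) by (simp add: scaleR_cancel_right)
qed

lemma gc_min: "\<exists>m>0. \<forall>t\<in>{0..1}. m \<le> norm (c t)"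
proof -
  have "continuous_on {0..1} (\<lambda>t. norm (c t))" using gc_cont by (intro continuous_intros)
  from continuous_attains_inf[OF compact_Icc _ this] obtain t0 where
    "t0 \<in> {0..1::real}" "\<forall>t\<in>{0..1}. norm (c t0) \<le> norm (c t)" by auto
  moreover have "norm (c t0) > 0" using gc_Q[OF \<open>t0 \<in> _\<close>] by auto
  ultimately show ?thesis by blast
qed

lemma gc_Kcompact: "compact ((\<lambda>(r,t). r *\<^sub>R c t) ` ({a..b} \<times> {0..1}))"
proof (rule compact_continuous_image)
  show "continuous_on ({a..b} \<times> {0..1}) (\<lambda>(r, t). r *\<^sub>R c t)"
    using gc_cont
    by (auto intro!: continuous_intros continuous_on_compose2[OF gc_cont] simp: case_prod_unfold)
qed (intro compact_Times compact_Icc)+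

end



definition Omg :: "(real \<Rightarrow> real \<times> real) \<Rightarrow> (real \<times> real) set" where
  "Omg c = {r *\<^sub>R c t | r t. 0 \<le> r \<and> r < 1 \<and> t \<in> {0..1}}"

definition Kset :: "(real \<Rightarrow> real \<times> real) \<Rightarrow> real \<Rightarrow> real \<Rightarrow> (real \<times> real) set" where
  "Kset c a b = (\<lambda>(r,t). r *\<^sub>R c t) ` ({a..b} \<times> {0..1})"

context
  fixes R c
  assumes gc: "good_curve R c"
begin

lemma Kset_mem: "x \<in> Kset c a b \<longleftrightarrow> (\<exists>r t. a \<le> r \<and> r \<le> b \<and> t \<in> {0..1} \<and> x = r *\<^sub>R c t)"
  unfolding Kset_def by force

lemma Kset_closed: "closed (Kset c a b)"
  unfolding Kset_def using gc_Kcompact[OF gc] by (simp add: compact_imp_closed)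

lemma Omg_sub: "Omg c \<subseteq> quadrant - c ` {0..1}"
proof
  fix x assume "x \<in> Omg c"
  then obtain r t where rt: "0 \<le> r" "r < 1" "t \<in> {0..1}" "x = r *\<^sub>R c t" by (auto simp: Omg_def)
  have "x \<in> quadrant" using rt gc_Q[OF gc rt(3)] quadrant_scaleR by auto
  moreover have "x \<notin> c ` {0..1}"
  proof
    assume "x \<in> c ` {0..1}"
    then obtain t' where t': "t' \<in> {0..1}" "x = c t'" by auto
    show False
    proof (cases "r = 0")
      case True then show False using rt t' gc_Q[OF gc t'(1)] by auto
    next
      case False
      then have "r *\<^sub>R c t = 1 *\<^sub>R c t'" using rt t' by simp
      from gc_uniq[OF gc _ _ rt(3) t'(1) this] False rt show False by auto
    qed
  qed
  ultimately show "x \<in> quadrant - c ` {0..1}" by blast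
qed

lemma Omg_image: "Omg c = (\<lambda>(r,t). r *\<^sub>R c t) ` ({0..<1} \<times> {0..1})"
  unfolding Omg_def by force

lemma Kcont: "continuous_on (A \<times> {0..1}) (\<lambda>(r,t). r *\<^sub>R c t)"
  using gc_cont[OF gc]
  by (auto intro!: continuous_intros continuous_on_compose2[OF gc_cont[OF gc]] simp: case_prod_unfold)

lemma Omg_connected: "connected (Omg c)"
  unfolding Omg_image
  by (rule connected_continuous_image[OF Kcont]) (intro connected_Times, auto simp: is_interval_connected_1)

lemma Omg_bounded: "bounded (Omg c)"
proof -
  have "Omg c \<subseteq> Kset c 0 1" unfolding Omg_image Kset_def by (rule image_mono) auto
  then show ?thesis using gc_Kcompact[OF gc, of 0 1] unfolding Kset_def
    using bounded_subset compact_imp_bounded by blast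
qed

lemma zero_Omg: "0 \<in> Omg c"
  unfolding Omg_def by (rule CollectI, rule exI[of _ 0], rule exI[of _ 0]) auto

lemma KS_Omg: "x \<in> Kset c 0 1 \<Longrightarrow> x \<notin> c ` {0..1} \<Longrightarrow> x \<in> Omg c"
proof -
  assume "x \<in> Kset c 0 1" "x \<notin> c ` {0..1}"
  then obtain r t where rt: "0 \<le> r" "r \<le> 1" "t \<in> {0..1}" "x = r *\<^sub>R c t" unfolding Kset_mem by auto
  have "r \<noteq> 1" using rt \<open>x \<notin> c ` {0..1}\<close> by auto
  then show "x \<in> Omg c" unfolding Omg_def using rt by (intro CollectI exI[of _ r] exI[of _ t]) auto
qed

lemma U_repr:
  assumes "y \<in> quadrant - c ` {0..1}" "y \<notin> Omg c"
  shows "\<exists>\<rho>>1. \<exists>u\<in>{0..1}. y = \<rho> *\<^sub>R c u"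
proof -
  have "y \<noteq> 0" using assms zero_Omg by auto
  then obtain u \<rho> where u: "u \<in> {0..1}" "\<rho> > 0" "y = \<rho> *\<^sub>R c u"
    using gc_repr[OF gc, of y] assms by auto
  have "\<rho> \<noteq> 1" using u assms by auto
  moreover have "\<not> \<rho> < 1" using u assms unfolding Omg_def by auto
  ultimately show ?thesis using u by (intro exI[of _ \<rho>]) auto
qed

lemma Omg_not_closure:
  assumes x: "x \<in> Omg c"
  shows "x \<notin> closure (quadrant - c ` {0..1} - Omg c)"
proof
  define U where "U = quadrant - c ` {0..1} - Omg c"
  assume xc: "x \<in> closure (quadrant - c ` {0..1} - Omg c)"
  obtain m where m: "m > 0" "\<forall>t\<in>{0..1}. m \<le> norm (c t)" using gc_min[OF gc] by auto
  define N where "N = (norm x + 1) / m"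
  have sub: "U \<inter> cball x 1 \<subseteq> Kset c 1 N"
  proof
    fix y assume y: "y \<in> U \<inter> cball x 1"
    then obtain \<rho> u where ru: "\<rho> > 1" "u \<in> {0..1}" "y = \<rho> *\<^sub>R c u"
      using U_repr unfolding U_def by blast
    have "norm y \<le> norm x + 1" using y norm_triangle_sub[of y x]
      by (auto simp: dist_norm norm_minus_commute)
    moreover have "norm y = \<rho> * norm (c u)" using ru by simp
    moreover have "\<rho> * m \<le> \<rho> * norm (c u)" using m ru by auto
    ultimately have "\<rho> * m \<le> norm x + 1" by linarith
    then have "\<rho> \<le> N" using m unfolding N_def by (simp add: field_simps)
    then show "y \<in> Kset c 1 N" unfolding Kset_mem using ru
      by (intro exI[of _ \<rho>] exI[of _ u]) auto
  qed
  have "x \<in> closure (U \<inter> cball x 1)"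
    unfolding closure_approachable
  proof (intro allI impI)
    fix e :: real assume "e > 0"
    then obtain y where "y \<in> U" "dist y x < min e 1"
      using xc unfolding closure_approachable U_def by (meson less_numeral_extra(1) min_less_iff_conj)
    then show "\<exists>y\<in>U \<inter> cball x 1. dist y x < e" by (intro bexI[of _ y]) (auto simp: dist_commute)
  qed
  then have "x \<in> Kset c 1 N" using closure_minimal[OF sub Kset_closed] by blast
  then obtain \<rho>' u' where ru': "1 \<le> \<rho>'" "u' \<in> {0..1}" "x = \<rho>' *\<^sub>R c u'" unfolding Kset_mem by auto
  obtain r t where rt: "0 \<le> r" "r < 1" "t \<in> {0..1}" "x = r *\<^sub>R c t" using x by (auto simp: Omg_def)
  show False
  proof (cases "r = 0")
    case True
    then have "\<rho>' *\<^sub>R c u' = 0" using rt ru' by simp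
    then show False using ru' gc_Q[OF gc ru'(2)] by auto
  next
    case False
    then have "r = \<rho>'" using gc_uniq[OF gc _ _ rt(3) ru'(2)] rt ru' by auto
    then show False using rt ru' by auto
  qed
qed

lemma Omg_component: "connected_component_set (quadrant - c ` {0..1}) 0 = Omg c"
proof -
  let ?S = "quadrant - c ` {0..1}"
  let ?C = "connected_component_set ?S 0"
  have OC: "Omg c \<subseteq> ?C"
    by (rule connected_component_maximal[OF zero_Omg Omg_connected Omg_sub])
  let ?A = "Kset c 0 1" and ?B = "closure (?S - Omg c)"
  have conn: "connected ?C" by (rule connected_connected_component)
  have CS: "?C \<subseteq> ?S" by (rule connected_component_subset)
  have OA: "Omg c \<subseteq> ?A" unfolding Omg_image Kset_def by (rule image_mono) auto
  have cov: "?C \<subseteq> ?A \<union> ?B"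
  proof
    fix x assume xC: "x \<in> ?C"
    have xS: "x \<in> ?S" using CS xC by (rule subsetD)
    show "x \<in> ?A \<union> ?B"
    proof (cases "x \<in> Omg c")
      case True then show ?thesis using OA by blast
    next
      case False
      then have "x \<in> ?S - Omg c" using xS by (rule_tac DiffI)
      then have "x \<in> ?B" using closure_subset by (rule_tac subsetD)
      then show ?thesis by (rule UnI2)
    qed
  qed
  have dis: "?A \<inter> ?B \<inter> ?C = {}"
  proof (rule ccontr)
    assume "?A \<inter> ?B \<inter> ?C \<noteq> {}"
    then obtain x where x: "x \<in> ?A" "x \<in> ?B" "x \<in> ?C" by blast
    have "x \<in> ?S" using CS x(3) by (rule subsetD)
    then have "x \<notin> c ` {0..1}" by blast
    then have "x \<in> Omg c" by (rule KS_Omg[OF x(1)])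
    then show False using x(2) by (rule Omg_not_closure[THEN notE])
  qed
  have a1: "0 \<in> ?A" using OA zero_Omg by (rule subsetD)
  have a2: "0 \<in> ?C" using OC zero_Omg by (rule subsetD)
  have a0: "0 \<in> ?A \<inter> ?C" using a1 a2 by (rule IntI)
  have "?B \<inter> ?C = {}"
  proof (rule ccontr)
    assume ne: "?B \<inter> ?C \<noteq> {}"
    have "closed ?A" by (rule Kset_closed)
    moreover have "closed ?B" by (rule closed_closure)
    moreover have "?A \<inter> ?C \<noteq> {}" using a0 by blast
    ultimately have "\<exists>A B. closed A \<and> closed B \<and> ?C \<subseteq> A \<union> B \<and> A \<inter> B \<inter> ?C = {} \<and> A \<inter> ?C \<noteq> {} \<and> B \<inter> ?C \<noteq> {}"
      using cov dis ne by blast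
    moreover have "\<not> (\<exists>A B. closed A \<and> closed B \<and> ?C \<subseteq> A \<union> B \<and> A \<inter> B \<inter> ?C = {} \<and> A \<inter> ?C \<noteq> {} \<and> B \<inter> ?C \<noteq> {})"
      using conn[unfolded connected_closed] by assumption
    ultimately show False by (rule notE[rotated])
  qed
  have CA: "?C \<subseteq> ?A"
  proof
    fix x assume xC: "x \<in> ?C"
    then have "x \<in> ?A \<union> ?B" using cov by (rule subsetD[rotated])
    moreover have "x \<notin> ?B" using \<open>?B \<inter> ?C = {}\<close> xC by blast
    ultimately show "x \<in> ?A" by blast
  qed
  have "?C \<subseteq> Omg c"
  proof
    fix x assume xC: "x \<in> ?C"
    have "x \<in> ?S" using CS xC by (rule subsetD)
    then have n: "x \<notin> c ` {0..1}" by blast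
    have "x \<in> ?A" using CA xC by (rule subsetD)
    then show "x \<in> Omg c" using n by (rule KS_Omg)
  qed
  then show ?thesis using OC by (rule equalityI)
qed

lemma other_components_unbounded:
  assumes "C \<in> components (quadrant - c ` {0..1})" "C \<noteq> Omg c"
  shows "\<not> bounded C"
proof
  let ?S = "quadrant - c ` {0..1}"
  assume bC: "bounded C"
  obtain x where x: "x \<in> ?S" "C = connected_component_set ?S x" using assms components_iff by blast
  have xO: "x \<notin> Omg c"
  proof
    assume "x \<in> Omg c"
    then have "x \<in> connected_component_set ?S 0" using Omg_component by simp
    then have "C = Omg c" using connected_component_eq x Omg_component by metis
    then show False using assms by simp
  qed
  then obtain \<rho> u where ru: "\<rho> > 1" "u \<in> {0..1}" "x = \<rho> *\<^sub>R c u" using U_repr x by blast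
  let ?ray = "(\<lambda>s. s *\<^sub>R x) ` {1..}"
  have ray_sub: "?ray \<subseteq> ?S"
  proof
    fix y assume "y \<in> ?ray"
    then obtain s where s: "s \<ge> 1" "y = s *\<^sub>R x" by auto
    have yy: "y = (s * \<rho>) *\<^sub>R c u" using s ru by simp
    have "y \<in> quadrant" using yy gc_Q[OF gc ru(2)] ru s quadrant_scaleR by auto
    moreover have "y \<notin> c ` {0..1}"
    proof
      assume "y \<in> c ` {0..1}"
      then obtain t where t: "t \<in> {0..1}" "y = 1 *\<^sub>R c t" by auto
      have "s * \<rho> = 1" using gc_uniq[OF gc _ _ ru(2) t(1)] yy t ru s by auto
      moreover have "s * \<rho> > 1" using s(1) ru(1) mult_right_mono[of 1 s \<rho>] by linarith
      ultimately show False by simp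
    qed
    ultimately show "y \<in> ?S" by blast
  qed
  have "connected ?ray"
    by (intro connected_continuous_image continuous_intros) (auto simp: is_interval_connected_1 is_interval_def)
  moreover have "x \<in> ?ray" by (rule image_eqI[of _ _ 1]) auto
  ultimately have "?ray \<subseteq> C" using connected_component_maximal ray_sub x by metis
  obtain B where B: "\<forall>y\<in>C. norm y \<le> B" using bC bounded_iff by blast
  have nx: "norm x > 0" using ru gc_Q[OF gc ru(2)] by auto
  define s where "s = max 1 ((\<bar>B\<bar> + 1) / norm x)"
  have "s \<in> {1..}" by (simp add: s_def)
  then have "s *\<^sub>R x \<in> C" using \<open>?ray \<subseteq> C\<close> by blast
  then have "norm (s *\<^sub>R x) \<le> B" using B by blast
  moreover have "norm (s *\<^sub>R x) = s * norm x" using \<open>s \<in> {1..}\<close> by simp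
  ultimately have "s * norm x \<le> B" by (simp only:)
  moreover have "(\<bar>B\<bar> + 1) / norm x * norm x \<le> s * norm x" using nx
    by (intro mult_right_mono) (auto simp: s_def)
  moreover have "(\<bar>B\<bar> + 1) / norm x * norm x = \<bar>B\<bar> + 1" using nx by simp
  ultimately have "\<bar>B\<bar> + 1 \<le> B" by (simp only:)
  then show False by simp
qed

lemma components_convex_iff:
  "(\<forall>C\<in>components (quadrant - c ` {0..1}). bounded C \<longrightarrow> convex C) \<longleftrightarrow> convex (Omg c)"
proof
  assume H: "\<forall>C\<in>components (quadrant - c ` {0..1}). bounded C \<longrightarrow> convex C"
  have "0 \<in> quadrant - c ` {0..1}" using zero_Omg Omg_sub by (rule subsetD[rotated])
  then have "Omg c \<in> components (quadrant - c ` {0..1})"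
    unfolding components_iff Omg_component[symmetric] by (rule exI[of _ 0, OF conjI[OF _ refl]])
  with H Omg_bounded show "convex (Omg c)" by simp
next
  assume cO: "convex (Omg c)"
  show "\<forall>C\<in>components (quadrant - c ` {0..1}). bounded C \<longrightarrow> convex C"
  proof (intro ballI impI)
    fix C assume C: "C \<in> components (quadrant - c ` {0..1})" "bounded C"
    have "C = Omg c"
    proof (rule ccontr)
      assume "C \<noteq> Omg c"
      from other_components_unbounded[OF C(1) this] C(2) show False by (rule notE)
    qed
    then show "convex C" using cO by simp
  qed
qed

end



lemma ur_eq[simp]: "x \<in> {0..1} \<Longrightarrow> y \<in> {0..1} \<Longrightarrow> unit_restrict d x y = d x y"
  by (simp add: unit_restrict_def)

context
  fixes d
  assumes P: "ptolemy_interval d"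
begin

lemma P_ms: "Metric_space {0..1} (unit_restrict d)" using P by (simp add: ptolemy_interval_def)
lemma P_top: "Metric_space.mtopology {0..1} (unit_restrict d) = subtopology euclidean {0..1}"
  using P by (simp add: ptolemy_interval_def)
lemma P_pt: "0 \<le> x1 \<Longrightarrow> x1 \<le> x2 \<Longrightarrow> x2 \<le> x3 \<Longrightarrow> x3 \<le> x4 \<Longrightarrow> x4 \<le> 1 \<Longrightarrow>
        d x1 x3 * d x2 x4 = d x1 x2 * d x3 x4 + d x1 x4 * d x3 x2"
  using P unfolding ptolemy_interval_def by blast

lemma P_nonneg: "x \<in> {0..1} \<Longrightarrow> y \<in> {0..1} \<Longrightarrow> 0 \<le> d x y"
  using Metric_space.nonneg[OF P_ms, of x y] by simp
lemma P_sym: "x \<in> {0..1} \<Longrightarrow> y \<in> {0..1} \<Longrightarrow> d x y = d y x"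
  using Metric_space.commute[OF P_ms, of x y] by simp
lemma P_zero: "x \<in> {0..1} \<Longrightarrow> y \<in> {0..1} \<Longrightarrow> d x y = 0 \<longleftrightarrow> x = y"
  using Metric_space.zero[OF P_ms, of x y] by simp
lemma P_tri: "x \<in> {0..1} \<Longrightarrow> y \<in> {0..1} \<Longrightarrow> z \<in> {0..1} \<Longrightarrow> d x z \<le> d x y + d y z"
  using Metric_space.triangle[OF P_ms, of x y z] by simp

lemma P_R: "d 0 1 > 0"
  using P_nonneg[of 0 1] P_zero[of 0 1] by simp

lemma P_det_ord:
  assumes "0 \<le> x" "x \<le> y" "y \<le> 1"
  shows "det2 (ptolemy_curve d x) (ptolemy_curve d y) = d 0 1 * d x y"
proof -
  have "d 0 y * d x 1 = d 0 x * d y 1 + d 0 1 * d y x" using P_pt[of 0 x y 1] assms by simp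
  moreover have "d 0 y = d y 0" "d 0 x = d x 0" "d y x = d x y" using assms P_sym by auto
  ultimately show ?thesis unfolding det2_def ptolemy_curve_def by (simp add: algebra_simps)
qed

lemma P_det_abs:
  assumes "x \<in> {0..1}" "y \<in> {0..1}"
  shows "d x y = \<bar>det2 (ptolemy_curve d x) (ptolemy_curve d y)\<bar> / d 0 1"
proof (cases "x \<le> y")
  case True
  then show ?thesis using P_det_ord[of x y] assms P_R P_nonneg[of x y] by (simp add: abs_mult)
next
  case False
  then have "det2 (ptolemy_curve d y) (ptolemy_curve d x) = d 0 1 * d y x"
    using P_det_ord[of y x] assms by simp
  then show ?thesis using assms P_R P_nonneg[of x y] P_sym[of x y] det2_swap[of "ptolemy_curve d x"]
    by (simp add: abs_mult)
qed

lemma P_cont_pt: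
  assumes "x \<in> {0..1}" "e > 0"
  shows "\<exists>\<delta>>0. \<forall>y\<in>{0..1}. \<bar>y - x\<bar> < \<delta> \<longrightarrow> d x y < e"
proof -
  have "openin (subtopology euclidean {0..1}) (Metric_space.mball {0..1} (unit_restrict d) x e)"
    using Metric_space.openin_mball[OF P_ms] P_top by metis
  then obtain T where T: "open T" "Metric_space.mball {0..1} (unit_restrict d) x e = T \<inter> {0..1}"
    unfolding openin_subtopology by auto
  have "x \<in> T" using T(2) Metric_space.centre_in_mball_iff[OF P_ms, of x e] assms by auto
  then obtain \<delta> where "\<delta> > 0" "ball x \<delta> \<subseteq> T" using T(1) open_contains_ball by blast
  then show ?thesis
  proof (intro exI[of _ \<delta>] conjI ballI impI)
    fix y assume y: "y \<in> {0..1}" "\<bar>y - x\<bar> < \<delta>"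
    then have "y \<in> T \<inter> {0..1}" using \<open>ball x \<delta> \<subseteq> T\<close> by (auto simp: dist_real_def)
    then have "y \<in> Metric_space.mball {0..1} (unit_restrict d) x e" using T(2) by simp
    then have "unit_restrict d x y < e" using Metric_space.in_mball[OF P_ms] by blast
    then show "d x y < e" using y assms by simp
  qed simp
qed

lemma P_cont_pt2:
  assumes "x \<in> {0..1}" "e > 0"
  shows "\<exists>r>0. \<forall>y\<in>{0..1}. d x y < r \<longrightarrow> \<bar>y - x\<bar> < e"
proof -
  have "openin (subtopology euclidean {0..1}) (ball x e \<inter> {0..1})"
    unfolding openin_subtopology by auto
  then have "openin (Metric_space.mtopology {0..1} (unit_restrict d)) (ball x e \<inter> {0..1})"
    using P_top by simp
  moreover have "x \<in> ball x e \<inter> {0..1}" using assms by auto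
  ultimately obtain r where r: "r > 0" "Metric_space.mball {0..1} (unit_restrict d) x r \<subseteq> ball x e \<inter> {0..1}"
    using Metric_space.openin_mtopology[OF P_ms] by meson
  show ?thesis
  proof (intro exI[of _ r] conjI ballI impI)
    fix y assume y: "y \<in> {0..1}" "d x y < r"
    then have "y \<in> Metric_space.mball {0..1} (unit_restrict d) x r"
      using Metric_space.in_mball[OF P_ms] assms by simp
    then show "\<bar>y - x\<bar> < e" using r by (auto simp: dist_real_def)
  qed fact
qed

lemma P_cont: "a \<in> {0..1} \<Longrightarrow> continuous_on {0..1} (\<lambda>t. d t a)"
  unfolding continuous_on_iff
proof (intro ballI allI impI)
  fix x e assume a: "a \<in> {0..1}" and x: "x \<in> {0..1::real}" and e: "(0::real) < e"
  obtain \<delta> where \<delta>: "\<delta> > 0" "\<forall>y\<in>{0..1}. \<bar>y - x\<bar> < \<delta> \<longrightarrow> d x y < e" using P_cont_pt[OF x e] by blast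
  show "\<exists>\<delta>>0. \<forall>y\<in>{0..1}. dist y x < \<delta> \<longrightarrow> dist (d y a) (d x a) < e"
  proof (intro exI[of _ \<delta>] conjI ballI impI)
    fix y assume y: "y \<in> {0..1}" "dist y x < \<delta>"
    then have "d x y < e" using \<delta> by (simp add: dist_real_def)
    moreover have "d x a \<le> d x y + d y a" "d y a \<le> d y x + d x a" using P_tri a x y by auto
    moreover have "d y x = d x y" using P_sym x y by auto
    ultimately show "dist (d y a) (d x a) < e" by (simp add: dist_real_def abs_less_iff)
  qed fact
qed

lemma P_good: "good_curve (d 0 1) (ptolemy_curve d)"
  unfolding good_curve_def
proof (intro conjI allI impI)
  show "0 < d 0 1" by (rule P_R)
  show "continuous_on {0..1} (ptolemy_curve d)"
    unfolding ptolemy_curve_def by (intro continuous_on_Pair P_cont) auto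
  show "ptolemy_curve d ` {0..1} \<subseteq> quadrant - {0}"
  proof
    fix p assume "p \<in> ptolemy_curve d ` {0..1}"
    then obtain t where t: "t \<in> {0..1}" "p = (d t 1, d t 0)" by (auto simp: ptolemy_curve_def)
    have "p \<in> quadrant" using t P_nonneg by (auto simp: quadrant_def)
    moreover have "p \<noteq> 0" using t P_zero[of t 1] P_zero[of t 0] by (auto simp: prod_eq_iff)
    ultimately show "p \<in> quadrant - {0}" by simp
  qed
  show "ptolemy_curve d 0 = (d 0 1, 0)" using P_zero[of 0 0] by (simp add: ptolemy_curve_def)
  show "ptolemy_curve d 1 = (0, d 0 1)" using P_zero[of 1 1] P_sym[of 1 0] by (simp add: ptolemy_curve_def)
  fix s t :: real assume st: "0 \<le> s" "s < t" "t \<le> 1"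
  then have "det2 (ptolemy_curve d s) (ptolemy_curve d t) = d 0 1 * d s t" by (intro P_det_ord) auto
  moreover have "d s t > 0" using P_nonneg[of s t] P_zero[of s t] st by force
  ultimately show "0 < det2 (ptolemy_curve d s) (ptolemy_curve d t)" using P_R by simp
qed

lemma P_T: "t \<in> {0..1} \<Longrightarrow> ptolemy_curve d t \<in> Tset (e1 (d 0 1)) (e2 (d 0 1))"
proof -
  assume t: "t \<in> {0..1}"
  let ?R = "d 0 1"
  have R: "?R > 0" by (rule P_R)
  define a where "a = d t 1 / ?R"
  define b where "b = d t 0 / ?R"
  have eq: "ptolemy_curve d t = a *\<^sub>R e1 ?R + b *\<^sub>R e2 ?R"
    using R by (simp add: a_def b_def e1_def e2_def ptolemy_curve_def)
  have t1: "d 0 1 \<le> d 0 t + d t 1" "d t 0 \<le> d t 1 + d 1 0" "d t 1 \<le> d t 0 + d 0 1"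
    using P_tri t by auto
  have s: "d 0 t = d t 0" "d 1 0 = d 0 1" using P_sym t by auto
  have "a + b \<ge> 1" using t1 s R by (simp add: a_def b_def field_simps)
  moreover have "a + 1 \<ge> b" using t1 s R by (simp add: a_def b_def field_simps)
  moreover have "b + 1 \<ge> a" using t1 s R by (simp add: a_def b_def field_simps)
  moreover have "a \<ge> 0" "b \<ge> 0" using R P_nonneg t by (auto simp: a_def b_def)
  moreover have "ptolemy_curve d t \<in> quadrant" using P_nonneg t by (auto simp: quadrant_def ptolemy_curve_def)
  ultimately show ?thesis unfolding Tset_def using eq by blast
qed

end



context
  fixes R c
  assumes gc: "good_curve R c"
begin

lemma Omg_mem: "0 \<le> r \<Longrightarrow> r < 1 \<Longrightarrow> t \<in> {0..1} \<Longrightarrow> r *\<^sub>R c t \<in> Omg c"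
  unfolding Omg_def by blast

lemma tri_convex_aux:
  assumes tri: "\<And>s w t. 0 \<le> s \<Longrightarrow> s \<le> w \<Longrightarrow> w \<le> t \<Longrightarrow> t \<le> 1 \<Longrightarrow>
                   det2 (c s) (c t) \<le> det2 (c s) (c w) + det2 (c w) (c t)"
    and A: "0 \<le> A" and B: "0 \<le> B" and AB: "A + B < 1"
    and st: "s \<in> {0..1}" "t \<in> {0..1}" "s \<le> t"
  shows "A *\<^sub>R c s + B *\<^sub>R c t \<in> Omg c"
proof -
  let ?z = "A *\<^sub>R c s + B *\<^sub>R c t"
  show ?thesis
  proof (cases "s = t")
    case True
    then have "?z = (A + B) *\<^sub>R c s" by (simp add: scaleR_add_left)
    then show ?thesis using Omg_mem[of "A+B" s] A B AB st by simp
  next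
    case False
    then have slt: "s < t" using st by simp
    have Dst: "det2 (c s) (c t) > 0" using gc_det[OF gc, of s t] st slt by auto
    show ?thesis
    proof (cases "?z = 0")
      case True then show ?thesis using zero_Omg[OF gc] by simp
    next
      case False
      have "?z \<in> quadrant" using gc_Q[OF gc st(1)] gc_Q[OF gc st(2)] A B
        by (intro quadrant_add quadrant_scaleR) auto
      then obtain w \<rho> where w: "w \<in> {0..1}" "\<rho> > 0" "?z = \<rho> *\<^sub>R c w"
        using gc_repr[OF gc, of ?z] False by blast
      have e1: "B * det2 (c s) (c t) = \<rho> * det2 (c s) (c w)"
        using arg_cong[OF w(3), of "det2 (c s)"] by (simp add: det2_add_right)
      have e2: "A * det2 (c s) (c t) = \<rho> * det2 (c w) (c t)"
        using arg_cong[OF w(3), of "\<lambda>p. det2 p (c t)"] by (simp add: det2_add_left)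
      have "det2 (c s) (c w) \<ge> 0"
      proof -
        have "\<rho> * det2 (c s) (c w) \<ge> 0" using e1 B Dst by (metis mult_nonneg_nonneg less_imp_le)
        then show ?thesis using w(2) by (simp add: zero_le_mult_iff)
      qed
      then have sw: "s \<le> w" using gc_det_nonneg_iff[OF gc st(1) w(1)] by simp
      have "det2 (c w) (c t) \<ge> 0"
      proof -
        have "\<rho> * det2 (c w) (c t) \<ge> 0" using e2 A Dst by (metis mult_nonneg_nonneg less_imp_le)
        then show ?thesis using w(2) by (simp add: zero_le_mult_iff)
      qed
      then have wt: "w \<le> t" using gc_det_nonneg_iff[OF gc w(1) st(2)] by simp
      have T: "det2 (c s) (c t) \<le> det2 (c s) (c w) + det2 (c w) (c t)"
        using tri[of s w t] st w sw wt by auto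
      have sum: "\<rho> * (det2 (c s) (c w) + det2 (c w) (c t)) = (A + B) * det2 (c s) (c t)"
        using e1 e2 by (simp add: algebra_simps)
      have pos: "det2 (c s) (c w) + det2 (c w) (c t) > 0" using T Dst by linarith
      have "(A + B) * det2 (c s) (c t) \<le> (A + B) * (det2 (c s) (c w) + det2 (c w) (c t))"
        using T A B by (intro mult_left_mono) auto
      then have "\<rho> * (det2 (c s) (c w) + det2 (c w) (c t)) \<le> (A + B) * (det2 (c s) (c w) + det2 (c w) (c t))"
        using sum by simp
      then have "\<rho> \<le> A + B" using pos by (simp add: mult_le_cancel_right_pos)
      then show ?thesis using w AB Omg_mem[of \<rho> w] by simp
    qed
  qed
qed

lemma tri_convex:
  assumes tri: "\<And>s w t. 0 \<le> s \<Longrightarrow> s \<le> w \<Longrightarrow> w \<le> t \<Longrightarrow> t \<le> 1 \<Longrightarrow>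
                   det2 (c s) (c t) \<le> det2 (c s) (c w) + det2 (c w) (c t)"
  shows "convex (Omg c)"
  unfolding convex_def
proof (intro ballI allI impI)
  fix x y u v assume x: "x \<in> Omg c" and y: "y \<in> Omg c" and uv: "0 \<le> (u::real)" "0 \<le> v" "u + v = 1"
  obtain a s where as: "0 \<le> a" "a < 1" "s \<in> {0..1}" "x = a *\<^sub>R c s" using x by (auto simp: Omg_def)
  obtain b t where bt: "0 \<le> b" "b < 1" "t \<in> {0..1}" "y = b *\<^sub>R c t" using y by (auto simp: Omg_def)
  have ua: "u * a \<le> u * max a b" "v * b \<le> v * max a b" using uv by (simp_all add: mult_left_mono)
  have "u * max a b + v * max a b = (u + v) * max a b" by (rule distrib_right[symmetric])
  then have "u * max a b + v * max a b = max a b" using uv by simp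
  then have AB: "u * a + v * b < 1" using ua as bt by (simp add: max_def split: if_splits)
  have eq: "u *\<^sub>R x + v *\<^sub>R y = (u * a) *\<^sub>R c s + (v * b) *\<^sub>R c t" using as bt by simp
  show "u *\<^sub>R x + v *\<^sub>R y \<in> Omg c"
  proof (cases "s \<le> t")
    case True
    have "u * a \<ge> 0" "v * b \<ge> 0" using uv as bt by simp_all
    then show ?thesis unfolding eq using tri_convex_aux[OF tri, of "u * a" "v * b" s t] as(3) bt(3) AB True by blast
  next
    case False
    have "u * a \<ge> 0" "v * b \<ge> 0" using uv as bt by simp_all
    moreover have "v * b + u * a < 1" using AB by simp
    ultimately have "(v * b) *\<^sub>R c t + (u * a) *\<^sub>R c s \<in> Omg c"
      using tri_convex_aux[OF tri, of "v * b" "u * a" t s] as(3) bt(3) False by simp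
    then show ?thesis unfolding eq by (simp add: add.commute)
  qed
qed

lemma c_closure: "t \<in> {0..1} \<Longrightarrow> c t \<in> closure (Omg c)"
proof -
  assume t: "t \<in> {0..1}"
  let ?f = "\<lambda>n. (1 - inverse (real (Suc n))) *\<^sub>R c t"
  have "(\<lambda>n. inverse (real (Suc n))) \<longlonglongrightarrow> 0" by (rule LIMSEQ_inverse_real_of_nat)
  then have "(\<lambda>n. 1 - inverse (real (Suc n))) \<longlonglongrightarrow> 1 - 0" by (intro tendsto_diff tendsto_const)
  then have "?f \<longlonglongrightarrow> (1 - 0) *\<^sub>R c t" by (intro tendsto_scaleR tendsto_const)
  moreover have "\<forall>n. ?f n \<in> Omg c"
  proof
    fix n
    have "inverse (real (Suc n)) \<le> 1" by (simp add: inverse_le_1_iff)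
    moreover have "inverse (real (Suc n)) > 0" by simp
    ultimately show "?f n \<in> Omg c" using Omg_mem t by simp
  qed
  ultimately show ?thesis unfolding closure_sequential by (intro exI[of _ ?f]) simp
qed

lemma convex_tri:
  assumes cv: "convex (Omg c)" and ord: "0 \<le> a" "a \<le> b" "b \<le> e" "e \<le> 1"
  shows "det2 (c a) (c e) \<le> det2 (c a) (c b) + det2 (c b) (c e)"
proof (cases "a = b \<or> b = e")
  case True then show ?thesis by (elim disjE) simp_all
next
  case False
  then have ab: "a < b" and be: "b < e" using ord by auto
  have I: "a \<in> {0..1}" "b \<in> {0..1}" "e \<in> {0..1}" using ord by auto
  let ?Dab = "det2 (c a) (c b)" and ?Dbe = "det2 (c b) (c e)" and ?Dae = "det2 (c a) (c e)"
  have p1: "?Dab > 0" using gc_det[OF gc, of a b] ab ord by auto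
  have p2: "?Dbe > 0" using gc_det[OF gc, of b e] be ord by auto
  have p3: "?Dae \<ge> 0" using gc_det_nonneg[OF gc, of a e] ord by auto
  define S where "S = ?Dab + ?Dbe"
  have S: "S > 0" using p1 p2 by (simp add: S_def)
  have ident: "?Dbe *\<^sub>R c a + ?Dab *\<^sub>R c e = ?Dae *\<^sub>R c b"
    unfolding det2_def prod_eq_iff by (simp add: algebra_simps)
  have cc: "convex (closure (Omg c))" using cv by (rule convex_closure)
  have q: "(?Dbe / S) *\<^sub>R c a + (?Dab / S) *\<^sub>R c e \<in> closure (Omg c)"
  proof (rule convexD[OF cc c_closure[OF I(1)] c_closure[OF I(3)]])
    show "0 \<le> ?Dbe / S" "0 \<le> ?Dab / S" using p1 p2 S by simp_all
    show "?Dbe / S + ?Dab / S = 1" using S unfolding S_def by (simp add: add_divide_distrib[symmetric])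
  qed
  have "(?Dbe / S) *\<^sub>R c a + (?Dab / S) *\<^sub>R c e = (1/S) *\<^sub>R (?Dbe *\<^sub>R c a + ?Dab *\<^sub>R c e)"
    by (simp add: scaleR_add_right)
  also have "\<dots> = (?Dae / S) *\<^sub>R c b" unfolding ident by simp
  finally have qb: "(?Dae / S) *\<^sub>R c b \<in> closure (Omg c)" using q by simp
  have OK: "Omg c \<subseteq> Kset c 0 1" unfolding Omg_image[OF gc] Kset_def by (rule image_mono) auto
  have "closure (Omg c) \<subseteq> Kset c 0 1" by (rule closure_minimal[OF OK Kset_closed[OF gc]])
  then have "(?Dae / S) *\<^sub>R c b \<in> Kset c 0 1" using qb by (rule subsetD)
  then have "\<exists>r t. 0 \<le> r \<and> r \<le> 1 \<and> t \<in> {0..1} \<and> (?Dae / S) *\<^sub>R c b = r *\<^sub>R c t"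
    by (simp only: Kset_mem[OF gc])
  then obtain r t where rt: "0 \<le> r" "r \<le> 1" "t \<in> {0..1}" "(?Dae / S) *\<^sub>R c b = r *\<^sub>R c t"
    by blast
  have "?Dae / S \<le> 1"
  proof (cases "?Dae = 0")
    case True then show ?thesis by simp
  next
    case False
    then have pos: "?Dae / S > 0" using p3 S by simp
    have cb: "c b \<noteq> 0" using gc_Q[OF gc I(2)] by blast
    have "r \<noteq> 0"
    proof
      assume "r = 0"
      then have "(?Dae / S) *\<^sub>R c b = 0" using rt(4) by simp
      then show False using pos cb S \<open>?Dae \<noteq> 0\<close> by simp
    qed
    then have rp: "r > 0" using rt(1) by simp
    have "?Dae / S = r" using gc_uniq[OF gc pos rp I(2) rt(3) rt(4)] by (rule conjunct2)
    then show ?thesis using rt(2) by simp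
  qed
  then have "?Dae \<le> S" using S by (simp add: divide_le_eq)
  then show ?thesis by (simp add: S_def)
qed

end



lemma plucker1: "det2 a e * det2 b f = det2 a b * det2 e f + det2 a f * det2 b e"
  unfolding det2_def by (simp add: algebra_simps)

lemma tri2_alg:
  fixes Dab Dac Dbc Da1 Db1 Dc1 :: real
  assumes Pl: "Dac * Db1 = Dab * Dc1 + Da1 * Dbc"
    and h1: "Db1 \<le> Dbc + Dc1" and h2: "Dac \<le> Da1 + Dc1" and p: "Dc1 > 0" "Dac \<ge> 0" "Dbc \<ge> 0"
  shows "Dab \<le> Dac + Dbc"
proof -
  have "Dab * Dc1 = Dac * Db1 - Da1 * Dbc" using Pl by simp
  also have "\<dots> \<le> Dac * (Dbc + Dc1) - Da1 * Dbc" using h1 p by (simp add: mult_left_mono)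
  also have "\<dots> = Dac * Dc1 + Dbc * (Dac - Da1)" by (simp add: algebra_simps)
  also have "\<dots> \<le> Dac * Dc1 + Dbc * Dc1" using h2 p by (simp add: mult_left_mono)
  finally have "Dab * Dc1 \<le> (Dac + Dbc) * Dc1" by (simp add: algebra_simps)
  then show ?thesis using p by (simp add: mult_le_cancel_right_pos)
qed

context
  fixes R c
  assumes gc: "good_curve R c"
    and inT: "c ` {0..1} \<subseteq> Tset (e1 R) (e2 R)"
    and cv: "convex (Omg c)"
begin

lemma cT:
  assumes "t \<in> {0..1}"
  shows "fst (c t) + snd (c t) \<ge> R" "fst (c t) + R \<ge> snd (c t)" "snd (c t) + R \<ge> fst (c t)"
    "fst (c t) \<ge> 0" "snd (c t) \<ge> 0"
proof -
  have "c t \<in> Tset (e1 R) (e2 R)" using inT assms by blast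
  then obtain a b where ab: "c t = a *\<^sub>R e1 R + b *\<^sub>R e2 R" "0 \<le> a" "0 \<le> b" "a + b \<ge> 1" "a + 1 \<ge> b" "b + 1 \<ge> a"
    unfolding Tset_def by blast
  have R: "R > 0" using gc_R[OF gc] .
  have f: "fst (c t) = a * R" and s: "snd (c t) = b * R" using ab(1) by (simp_all add: e1_def e2_def)
  show "fst (c t) + snd (c t) \<ge> R" using ab(4) R unfolding f s
    by (metis distrib_right mult_1 mult_right_mono less_imp_le)
  show "fst (c t) + R \<ge> snd (c t)" using ab(5) R unfolding f s
    by (metis distrib_right mult_1 mult_right_mono less_imp_le)
  show "snd (c t) + R \<ge> fst (c t)" using ab(6) R unfolding f s
    by (metis distrib_right mult_1 mult_right_mono less_imp_le)
  show "fst (c t) \<ge> 0" "snd (c t) \<ge> 0" using ab R unfolding f s by simp_all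
qed

abbreviation "D a b \<equiv> det2 (c a) (c b)"

lemma D0: "D 0 t = R * snd (c t)" by (simp add: gc_0[OF gc] det2_def)
lemma D1: "D t 1 = R * fst (c t)" by (simp add: gc_1[OF gc] det2_def)

lemma tri1: "0 \<le> a \<Longrightarrow> a \<le> b \<Longrightarrow> b \<le> e \<Longrightarrow> e \<le> 1 \<Longrightarrow> D a e \<le> D a b + D b e"
  by (rule convex_tri[OF gc cv])

lemma tri2_end:
  assumes "a \<in> {0..1}" "e \<in> {0..1}"
  shows "D a e \<le> D a 1 + D e 1"
proof -
  obtain xa ya where a: "c a = (xa, ya)" by fastforce
  obtain xe ye where e: "c e = (xe, ye)" by fastforce
  have Ta: "xa \<ge> 0" "ya \<ge> 0" "xa \<le> ya + R" using cT[OF assms(1)] a by auto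
  have Te: "xe \<ge> 0" "ye \<le> xe + R" using cT[OF assms(2)] e by auto
  have "xa * ye \<le> xa * (xe + R)" using Ta Te by (simp add: mult_left_mono)
  moreover have "(xa - ya) * xe \<le> R * xe" using Ta Te by (simp add: mult_right_mono)
  ultimately have "xa * ye - ya * xe \<le> R * xa + R * xe" by (simp add: algebra_simps)
  then show ?thesis using D1[of a] D1[of e] a e by (simp add: det2_def)
qed

lemma tri3_end:
  assumes "b \<in> {0..1}" "e \<in> {0..1}"
  shows "D b e \<le> D 0 b + D 0 e"
proof -
  obtain xb yb where b: "c b = (xb, yb)" by fastforce
  obtain xe ye where e: "c e = (xe, ye)" by fastforce
  have Tb: "yb \<ge> 0" "xb \<le> yb + R" using cT[OF assms(1)] b by auto
  have Te: "ye \<ge> 0" "xe \<ge> 0" "ye \<le> xe + R" using cT[OF assms(2)] e by auto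
  have "xb * ye \<le> (yb + R) * ye" using Tb Te by (simp add: mult_right_mono)
  moreover have "yb * (ye - xe) \<le> yb * R" using Tb Te by (simp add: mult_left_mono)
  ultimately have "xb * ye - yb * xe \<le> R * yb + R * ye" by (simp add: algebra_simps)
  then show ?thesis using D0[of b] D0[of e] b e by (simp add: det2_def)
qed

lemma tri2:
  assumes "0 \<le> a" "a \<le> b" "b \<le> e" "e \<le> 1"
  shows "D a b \<le> D a e + D b e"
proof (cases "e = 1")
  case True
  then show ?thesis using tri2_end[of a b] assms by simp
next
  case False
  have Pl: "D a e * D b 1 = D a b * D e 1 + D a 1 * D b e" by (rule plucker1)
  have h1: "D b 1 \<le> D b e + D e 1" using tri1[of b e 1] assms by simp
  have h2: "D a e \<le> D a 1 + D e 1" using tri2_end[of a e] assms by simp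
  have p: "D e 1 > 0" using gc_det[OF gc, of e 1] assms False by simp
  have "D a e \<ge> 0" "D b e \<ge> 0" using gc_det_nonneg[OF gc] assms by auto
  then show ?thesis using tri2_alg[OF Pl h1 h2 p] by simp
qed

lemma tri3:
  assumes "0 \<le> a" "a \<le> b" "b \<le> e" "e \<le> 1"
  shows "D b e \<le> D a b + D a e"
proof (cases "a = 0")
  case True
  then show ?thesis using tri3_end[of b e] assms by simp
next
  case False
  have Pl: "D 0 b * D a e = D 0 a * D b e + D 0 e * D a b" using plucker1[of "c 0" "c b" "c a" "c e"]
    by (simp add: algebra_simps)
  have h1: "D 0 b \<le> D 0 a + D a b" using tri1[of 0 a b] assms by simp
  have h2: "D a e \<le> D 0 a + D 0 e" using tri3_end[of a e] assms by simp
  have p: "D 0 a > 0" using gc_det[OF gc, of 0 a] assms False by simp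
  have q: "D a b \<ge> 0" "D a e \<ge> 0" using gc_det_nonneg[OF gc] assms by auto
  have "D 0 a * D b e = D 0 b * D a e - D 0 e * D a b" using Pl by simp
  also have "\<dots> \<le> (D 0 a + D a b) * D a e - D 0 e * D a b" using h1 q by (simp add: mult_right_mono)
  also have "\<dots> = D 0 a * D a e + D a b * (D a e - D 0 e)" by (simp add: algebra_simps)
  also have "\<dots> \<le> D 0 a * D a e + D a b * D 0 a" using h2 q by (simp add: mult_left_mono)
  finally have "D 0 a * D b e \<le> D 0 a * (D a b + D a e)" by (simp add: algebra_simps)
  then show ?thesis using p by (simp add: mult_le_cancel_left_pos)
qed

lemma sorted_tri:
  assumes "0 \<le> a" "a \<le> b" "b \<le> e" "e \<le> 1"
  shows "\<bar>D a e\<bar> \<le> \<bar>D a b\<bar> + \<bar>D b e\<bar>" "\<bar>D a b\<bar> \<le> \<bar>D a e\<bar> + \<bar>D b e\<bar>"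
        "\<bar>D b e\<bar> \<le> \<bar>D a b\<bar> + \<bar>D a e\<bar>"
proof -
  have n: "D a b \<ge> 0" "D b e \<ge> 0" "D a e \<ge> 0" using gc_det_nonneg[OF gc] assms by auto
  show "\<bar>D a e\<bar> \<le> \<bar>D a b\<bar> + \<bar>D b e\<bar>" using n tri1[OF assms] by simp
  show "\<bar>D a b\<bar> \<le> \<bar>D a e\<bar> + \<bar>D b e\<bar>" using n tri2[OF assms] by simp
  show "\<bar>D b e\<bar> \<le> \<bar>D a b\<bar> + \<bar>D a e\<bar>" using n tri3[OF assms] by simp
qed

lemma absD_sym: "\<bar>D a b\<bar> = \<bar>D b a\<bar>" using det2_swap[of "c a" "c b"] by simp

lemma abs_tri:
  assumes "x \<in> {0..1}" "y \<in> {0..1}" "z \<in> {0..1}"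
  shows "\<bar>D x z\<bar> \<le> \<bar>D x y\<bar> + \<bar>D y z\<bar>"
proof -
  have s1: "\<bar>D x y\<bar> = \<bar>D y x\<bar>" "\<bar>D y z\<bar> = \<bar>D z y\<bar>" "\<bar>D x z\<bar> = \<bar>D z x\<bar>" by (rule absD_sym)+
  show ?thesis
  proof (cases "x \<le> y")
    case xy: True
    show ?thesis
    proof (cases "y \<le> z")
      case True then show ?thesis using sorted_tri(1)[of x y z] assms xy by auto
    next
      case yz: False
      show ?thesis
      proof (cases "x \<le> z")
        case True then show ?thesis using sorted_tri(2)[of x z y] assms xy yz s1 by auto
      next
        case False then show ?thesis using sorted_tri(2)[of z x y] assms xy yz s1 by auto
      qed
    qed
  next
    case xy: False
    show ?thesis
    proof (cases "x \<le> z")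
      case True then show ?thesis using sorted_tri(3)[of y x z] assms xy s1 by auto
    next
      case xz: False
      show ?thesis
      proof (cases "y \<le> z")
        case True then show ?thesis using sorted_tri(3)[of y z x] assms xy xz s1 by auto
      next
        case False then show ?thesis using sorted_tri(1)[of z y x] assms xy xz s1 by auto
      qed
    qed
  qed
qed

end



context
  fixes R c
  assumes gc: "good_curve R c"
    and inT: "c ` {0..1} \<subseteq> Tset (e1 R) (e2 R)"
    and cv: "convex (Omg c)"
begin

definition "dd x y = \<bar>det2 (c x) (c y)\<bar> / R"

lemma dd_ms: "Metric_space {0..1} (unit_restrict dd)"
proof
  have R: "R > 0" using gc_R[OF gc] .
  fix x y z :: real
  show "0 \<le> unit_restrict dd x y" using R by (simp add: unit_restrict_def dd_def)
  show "unit_restrict dd x y = unit_restrict dd y x"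
    using absD_sym[OF gc inT cv, of x y] by (auto simp: unit_restrict_def dd_def)
  assume x: "x \<in> {0..1}" and y: "y \<in> {0..1}"
  show "unit_restrict dd x y = 0 \<longleftrightarrow> x = y"
    using gc_det_zero[OF gc x y] x y R by (auto simp: dd_def)
  assume z: "z \<in> {0..1}"
  show "unit_restrict dd x z \<le> unit_restrict dd x y + unit_restrict dd y z"
    using abs_tri[OF gc inT cv x y z] x y z R by (simp add: dd_def add_divide_distrib[symmetric] divide_right_mono)
qed

lemma dd_cont: "x \<in> {0..1} \<Longrightarrow> continuous_on {0..1} (\<lambda>y. dd x y)"
  unfolding dd_def det2_def using gc_cont[OF gc] gc_R[OF gc] by (intro continuous_intros) auto

lemma dd_top: "Metric_space.mtopology {0..1} (unit_restrict dd) = subtopology euclidean {0..1}"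
proof -
  have MS: "Metric_space {0..1} (unit_restrict dd)" by (rule dd_ms)
  have cm: "continuous_map (subtopology euclidean {0..1}) (Metric_space.mtopology {0..1} (unit_restrict dd)) id"
    unfolding Metric_space.continuous_map_to_metric[OF MS]
  proof (intro ballI allI impI)
    fix x e assume x: "x \<in> topspace (subtopology euclidean {0..1::real})" and e: "(0::real) < e"
    then have xI: "x \<in> {0..1}" by simp
    obtain \<delta> where \<delta>: "\<delta> > 0" "\<forall>y\<in>{0..1}. dist y x < \<delta> \<longrightarrow> dist (dd x y) (dd x x) < e"
      using dd_cont[OF xI] xI e unfolding continuous_on_iff by blast
    have ddxx: "dd x x = 0" by (simp add: dd_def)
    show "\<exists>U. openin (subtopology euclidean {0..1}) U \<and> x \<in> U \<and>
            (\<forall>y\<in>U. id y \<in> Metric_space.mball {0..1} (unit_restrict dd) (id x) e)"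
    proof (intro exI[of _ "ball x \<delta> \<inter> {0..1}"] conjI ballI)
      show "openin (subtopology euclidean {0..1}) (ball x \<delta> \<inter> {0..1})"
        unfolding openin_subtopology by auto
      show "x \<in> ball x \<delta> \<inter> {0..1}" using xI \<delta> by auto
      fix y assume y: "y \<in> ball x \<delta> \<inter> {0..1}"
      then have "dist (dd x y) (dd x x) < e" using \<delta> by (auto simp: dist_commute)
      then have "unit_restrict dd x y < e" using xI y ddxx gc_R[OF gc] by (simp add: dist_real_def dd_def)
      then show "id y \<in> Metric_space.mball {0..1} (unit_restrict dd) (id x) e"
        using Metric_space.in_mball[OF MS] xI y by simp
    qed
  qed
  have "homeomorphic_map (subtopology euclidean {0..1}) (Metric_space.mtopology {0..1} (unit_restrict dd)) id"
  proof (rule continuous_imp_homeomorphic_map[OF cm])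
    show "compact_space (subtopology euclidean {0..1::real})"
      by (rule compact_space_subtopology) simp
    show "Hausdorff_space (Metric_space.mtopology {0..1} (unit_restrict dd))"
      by (rule Metric_space.Hausdorff_space_mtopology[OF MS])
    show "id ` topspace (subtopology euclidean {0..1}) = topspace (Metric_space.mtopology {0..1} (unit_restrict dd))"
      using Metric_space.topspace_mtopology[OF MS] by simp
  qed simp
  then show ?thesis by simp
qed

lemma dd_ord: "0 \<le> x \<Longrightarrow> x \<le> y \<Longrightarrow> y \<le> 1 \<Longrightarrow> dd x y = det2 (c x) (c y) / R"
  using gc_det_nonneg[OF gc, of x y] by (simp add: dd_def)

lemma dd_pt:
  assumes "0 \<le> x1" "x1 \<le> x2" "x2 \<le> x3" "x3 \<le> x4" "x4 \<le> 1"
  shows "dd x1 x3 * dd x2 x4 = dd x1 x2 * dd x3 x4 + dd x1 x4 * dd x3 x2"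
proof -
  have R: "R > 0" using gc_R[OF gc] .
  have e: "dd x1 x3 = det2 (c x1) (c x3) / R" "dd x2 x4 = det2 (c x2) (c x4) / R"
    "dd x1 x2 = det2 (c x1) (c x2) / R" "dd x3 x4 = det2 (c x3) (c x4) / R"
    "dd x1 x4 = det2 (c x1) (c x4) / R" "dd x3 x2 = det2 (c x2) (c x3) / R"
    using dd_ord assms absD_sym[OF gc inT cv, of x3 x2] by (auto simp: dd_def)
  have "det2 (c x1) (c x3) * det2 (c x2) (c x4) = det2 (c x1) (c x2) * det2 (c x3) (c x4) + det2 (c x1) (c x4) * det2 (c x2) (c x3)"
    by (rule plucker1)
  then show ?thesis unfolding e using R by (simp add: field_simps)
qed

lemma dd_ptolemy: "ptolemy_interval dd"
  unfolding ptolemy_interval_def using dd_ms dd_top dd_pt by blast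

lemma dd01: "dd 0 1 = R"
  using gc_R[OF gc] by (simp add: dd_def gc_0[OF gc] gc_1[OF gc] det2_def)

lemma dd_curve: "t \<in> {0..1} \<Longrightarrow> ptolemy_curve dd t = c t"
proof -
  assume t: "t \<in> {0..1}"
  have R: "R > 0" using gc_R[OF gc] .
  have "fst (c t) \<ge> 0" "snd (c t) \<ge> 0" using cT[OF gc inT cv t] by auto
  then show "ptolemy_curve dd t = c t" using R
    by (simp add: ptolemy_curve_def dd_def gc_0[OF gc] gc_1[OF gc] det2_def abs_mult prod_eq_iff)
qed

lemma dd_image: "ptolemy_curve dd ` {0..1} = c ` {0..1}"
  using dd_curve by (rule image_cong[OF refl])

end



lemma good_convex_curve:
  assumes gc: "good_curve R c" and cv: "convex (Omg c)"
  shows "convex_curve R c"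
  unfolding convex_curve_def
proof (intro conjI)
  show "continuous_on {0..1} c" by (rule gc_cont[OF gc])
  show "c ` {0..1} \<subseteq> quadrant - {0}" by (rule image_subsetI) (rule gc_Q[OF gc])
  show "c 0 = e1 R" using gc_0[OF gc] by (simp add: e1_def)
  show "c 1 = e2 R" using gc_1[OF gc] by (simp add: e2_def)
  show "strict_mono_on {0..1} (\<lambda>t. parg (c t))"
    unfolding strict_mono_on_def
  proof (intro allI impI)
    fix r s assume rs: "r \<in> {0..1::real} \<and> s \<in> {0..1} \<and> r < s"
    then have "det2 (c r) (c s) > 0" using gc_det[OF gc, of r s] by auto
    then show "parg (c r) < parg (c s)" using det2_pos_iff gc_Q[OF gc] rs by blast
  qed
  show "\<forall>C\<in>components (quadrant - c ` {0..1}). bounded C \<longrightarrow> convex C"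
    using components_convex_iff[OF gc] cv by blast
qed

lemma convex_curve_good:
  assumes cc: "convex_curve R c" and R: "R > 0"
  shows "good_curve R c" "convex (Omg c)"
proof -
  have Q: "\<And>t. t \<in> {0..1} \<Longrightarrow> c t \<in> quadrant - {0}" using cc unfolding convex_curve_def by blast
  have sm: "strict_mono_on {0..1} (\<lambda>t. parg (c t))" using cc unfolding convex_curve_def by blast
  show gc: "good_curve R c"
    unfolding good_curve_def
  proof (intro conjI allI impI)
    show "0 < R" by fact
    show "continuous_on {0..1} c" using cc unfolding convex_curve_def by blast
    show "c ` {0..1} \<subseteq> quadrant - {0}" by (rule image_subsetI) (rule Q)
    show "c 0 = (R, 0)" using cc unfolding convex_curve_def e1_def by blast
    show "c 1 = (0, R)" using cc unfolding convex_curve_def e2_def by blast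
    fix s t :: real assume st: "0 \<le> s" "s < t" "t \<le> 1"
    then have "parg (c s) < parg (c t)" using sm strict_mono_onD[of "{0..1}" "\<lambda>t. parg (c t)" s t] by auto
    then show "0 < det2 (c s) (c t)" using det2_pos_iff[of "c s" "c t"] Q st by auto
  qed
  show "convex (Omg c)"
    using components_convex_iff[OF gc] cc unfolding convex_curve_def by blast
qed

lemma P_convex_curve:
  assumes P: "ptolemy_interval d"
  shows "convex_curve (d 0 1) (ptolemy_curve d)"
proof -
  have gc: "good_curve (d 0 1) (ptolemy_curve d)" by (rule P_good[OF P])
  have "convex (Omg (ptolemy_curve d))"
  proof (rule tri_convex[OF gc])
    fix s w t :: real assume o: "0 \<le> s" "s \<le> w" "w \<le> t" "t \<le> 1"
    have "d s t \<le> d s w + d w t" using P_tri[OF P] o by auto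
    then have "d 0 1 * d s t \<le> d 0 1 * d s w + d 0 1 * d w t"
      using P_R[OF P] by (simp add: distrib_left[symmetric])
    then show "det2 (ptolemy_curve d s) (ptolemy_curve d t)
           \<le> det2 (ptolemy_curve d s) (ptolemy_curve d w) + det2 (ptolemy_curve d w) (ptolemy_curve d t)"
      using P_det_ord[OF P, of s t] P_det_ord[OF P, of s w] P_det_ord[OF P, of w t] o by simp
  qed
  then show ?thesis using good_convex_curve[OF gc] by simp
qed

lemma swap_swap[simp]: "swap_refl (swap_refl p) = p" by (simp add: swap_refl_def)
lemma det2_swap_refl: "det2 (swap_refl a) (swap_refl b) = - det2 a b" by (simp add: swap_refl_def det2_def)

lemma P_inj: "ptolemy_interval d \<Longrightarrow> inj_on (ptolemy_curve d) {0..1}"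
proof (rule inj_onI)
  fix x y assume P: "ptolemy_interval d" and xy: "x \<in> {0..1}" "y \<in> {0..1}" "ptolemy_curve d x = ptolemy_curve d y"
  then have "d x y = 0" using P_det_abs[OF P xy(1) xy(2)] by simp
  then show "x = y" using P_zero[OF P xy(1) xy(2)] by simp
qed

lemma iso_from_image:
  assumes P: "ptolemy_interval d" and P': "ptolemy_interval d'" and R: "d 0 1 = d' 0 1"
    and H: "k ` {0..1} = ptolemy_curve d' ` {0..1}"
    and K: "\<And>x y. x \<in> {0..1} \<Longrightarrow> y \<in> {0..1} \<Longrightarrow> \<bar>det2 (k x) (k y)\<bar> = \<bar>det2 (ptolemy_curve d x) (ptolemy_curve d y)\<bar>"
  shows "isometric_intervals d d'"
proof -
  let ?g = "ptolemy_curve d'" and ?h = "ptolemy_curve d" and ?I = "{0..1::real}"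
  have ig: "inj_on ?g ?I" by (rule P_inj[OF P'])
  define f where "f = (\<lambda>x. the_inv_into ?I ?g (k x))"
  have fI: "x \<in> ?I \<Longrightarrow> f x \<in> ?I" for x
    unfolding f_def using H by (intro the_inv_into_into[OF ig]) auto
  have gf: "x \<in> ?I \<Longrightarrow> ?g (f x) = k x" for x
    unfolding f_def using H by (intro f_the_inv_into_f[OF ig]) auto
  have kinj: "inj_on k ?I"
  proof (rule inj_onI)
    fix x y assume xy: "x \<in> ?I" "y \<in> ?I" "k x = k y"
    then have "det2 (k x) (k y) = 0" by (simp add: det2_def)
    then have "det2 (?h x) (?h y) = 0" using K[OF xy(1) xy(2)] by simp
    then have "d x y = 0" using P_det_abs[OF P xy(1) xy(2)] by simp
    then show "x = y" using P_zero[OF P xy(1) xy(2)] by simp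
  qed
  have "bij_betw f ?I ?I"
    unfolding bij_betw_def
  proof
    show "inj_on f ?I"
    proof (rule inj_onI)
      fix x y assume xy: "x \<in> ?I" "y \<in> ?I" "f x = f y"
      then have "k x = k y" using gf[OF xy(1)] gf[OF xy(2)] by simp
      then show "x = y" using kinj xy by (simp add: inj_on_eq_iff)
    qed
    show "f ` ?I = ?I"
    proof
      show "f ` ?I \<subseteq> ?I" using fI by blast
      show "?I \<subseteq> f ` ?I"
      proof
        fix s assume s: "s \<in> ?I"
        then have "?g s \<in> k ` ?I" using H by blast
        then obtain x where x: "x \<in> ?I" "k x = ?g s" by auto
        have "f x = s" unfolding f_def x(2) using the_inv_into_f_f[OF ig s] .
        then show "s \<in> f ` ?I" using x by blast
      qed
    qed
  qed
  moreover have "\<forall>x\<in>?I. \<forall>y\<in>?I. d' (f x) (f y) = d x y"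
  proof (intro ballI)
    fix x y assume xy: "x \<in> ?I" "y \<in> ?I"
    have "d' (f x) (f y) = \<bar>det2 (?g (f x)) (?g (f y))\<bar> / d' 0 1" using P_det_abs[OF P' fI[OF xy(1)] fI[OF xy(2)]] .
    also have "\<dots> = \<bar>det2 (k x) (k y)\<bar> / d 0 1" unfolding gf[OF xy(1)] gf[OF xy(2)] R ..
    also have "\<dots> = \<bar>det2 (?h x) (?h y)\<bar> / d 0 1" unfolding K[OF xy] ..
    also have "\<dots> = d x y" using P_det_abs[OF P xy] by simp
    finally show "d' (f x) (f y) = d x y" .
  qed
  ultimately show ?thesis unfolding isometric_intervals_def by blast
qed

lemma iso_imp_image:
  assumes P: "ptolemy_interval d" and P': "ptolemy_interval d'" and iso: "isometric_intervals d d'"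
  shows "eq_mod_refl (ptolemy_curve d ` {0..1}) (ptolemy_curve d' ` {0..1})"
proof -
  let ?I = "{0..1::real}"
  obtain f where bij: "bij_betw f ?I ?I" and isf: "\<forall>x\<in>?I. \<forall>y\<in>?I. d' (f x) (f y) = d x y"
    using iso unfolding isometric_intervals_def by blast
  have fI: "x \<in> ?I \<Longrightarrow> f x \<in> ?I" for x by (rule bij_betw_apply[OF bij])
  have cont: "continuous_on ?I f"
    unfolding continuous_on_iff
  proof (intro ballI allI impI)
    fix x e assume x: "x \<in> ?I" and e: "(0::real) < e"
    obtain r where r: "r > 0" "\<forall>z\<in>?I. d' (f x) z < r \<longrightarrow> \<bar>z - f x\<bar> < e"
      using P_cont_pt2[OF P' fI[OF x] e] by blast
    obtain \<delta> where \<delta>: "\<delta> > 0" "\<forall>y\<in>?I. \<bar>y - x\<bar> < \<delta> \<longrightarrow> d x y < r"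
      using P_cont_pt[OF P x r(1)] by blast
    show "\<exists>\<delta>>0. \<forall>y\<in>?I. dist y x < \<delta> \<longrightarrow> dist (f y) (f x) < e"
    proof (intro exI[of _ \<delta>] conjI ballI impI)
      fix y assume y: "y \<in> ?I" "dist y x < \<delta>"
      then have "d x y < r" using \<delta> by (simp add: dist_real_def)
      then have "d' (f x) (f y) < r" using isf x y by simp
      then show "dist (f y) (f x) < e" using r fI[OF y(1)] by (simp add: dist_real_def)
    qed fact
  qed
  have inj: "inj_on f ?I" using bij by (simp add: bij_betw_def)
  have img: "f ` ?I = ?I" using bij by (simp add: bij_betw_def)
  have "strict_mono_on ?I f \<or> strict_antimono_on ?I f"
    using injective_eq_monotone_map[OF is_interval_cc cont] inj by blast
  then show ?thesis
  proof
    assume sm: "strict_mono_on ?I f"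
    have le: "x \<in> ?I \<Longrightarrow> y \<in> ?I \<Longrightarrow> x \<le> y \<Longrightarrow> f x \<le> f y" for x y
      using sm strict_mono_onD[of ?I f x y] by (cases "x = y") auto
    have "(0::real) \<in> f ` ?I" "(1::real) \<in> f ` ?I" unfolding img by simp_all
    then obtain y0 y1 where y0: "y0 \<in> ?I" "f y0 = 0" and y1: "y1 \<in> ?I" "f y1 = 1" by (metis imageE)
    have f0: "f 0 = 0" using le[of 0 y0] y0 fI[of 0] by force
    have f1: "f 1 = 1" using le[of y1 1] y1 fI[of 1] by force
    have "ptolemy_curve d' (f t) = ptolemy_curve d t" if t: "t \<in> ?I" for t
    proof -
      have "d' (f t) (f 1) = d t 1" "d' (f t) (f 0) = d t 0" using isf t by simp_all
      then show ?thesis using f0 f1 by (simp add: ptolemy_curve_def)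
    qed
    then have "(\<lambda>t. ptolemy_curve d' (f t)) ` ?I = ptolemy_curve d ` ?I"
      by (rule image_cong[OF refl])
    then have "ptolemy_curve d' ` (f ` ?I) = ptolemy_curve d ` ?I" by (simp add: image_image)
    then show ?thesis unfolding img eq_mod_refl_def by simp
  next
    assume sm: "strict_antimono_on ?I f"
    have le: "x \<in> ?I \<Longrightarrow> y \<in> ?I \<Longrightarrow> x \<le> y \<Longrightarrow> f y \<le> f x" for x y
      using sm monotone_onD[of ?I "(<)" "\<lambda>x y. y < x" f x y] by (cases "x = y") auto
    have "(0::real) \<in> f ` ?I" "(1::real) \<in> f ` ?I" unfolding img by simp_all
    then obtain y0 y1 where y0: "y0 \<in> ?I" "f y0 = 0" and y1: "y1 \<in> ?I" "f y1 = 1" by (metis imageE)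
    have f1: "f 1 = 0" using le[of y0 1] y0 fI[of 1] by force
    have f0: "f 0 = 1" using le[of 0 y1] y1 fI[of 0] by force
    have "ptolemy_curve d' (f t) = swap_refl (ptolemy_curve d t)" if t: "t \<in> ?I" for t
    proof -
      have "d' (f t) (f 0) = d t 0" "d' (f t) (f 1) = d t 1" using isf t by simp_all
      then show ?thesis using f0 f1 by (simp add: ptolemy_curve_def swap_refl_def)
    qed
    then have "(\<lambda>t. ptolemy_curve d' (f t)) ` ?I = (\<lambda>t. swap_refl (ptolemy_curve d t)) ` ?I"
      by (rule image_cong[OF refl])
    then have "ptolemy_curve d' ` (f ` ?I) = swap_refl ` ptolemy_curve d ` ?I" by (simp add: image_image)
    then have "ptolemy_curve d' ` ?I = swap_refl ` ptolemy_curve d ` ?I" unfolding img .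
    then have "ptolemy_curve d ` ?I = swap_refl ` ptolemy_curve d' ` ?I"
      by (simp add: image_image)
    then show ?thesis unfolding eq_mod_refl_def by simp
  qed
qed



theorem proposition3p7:
  fixes R :: real
  assumes "R > 0"
  shows "(\<forall>d. ptolemy_interval d \<and> d 0 1 = R \<longrightarrow>
            convex_curve R (ptolemy_curve d) \<and>
            ptolemy_curve d ` {0..1} \<subseteq> Tset (e1 R) (e2 R))
       \<and> (\<forall>d d'. ptolemy_interval d \<and> d 0 1 = R \<and> ptolemy_interval d' \<and> d' 0 1 = R \<longrightarrow>
            (isometric_intervals d d' \<longleftrightarrow>
             eq_mod_refl (ptolemy_curve d ` {0..1}) (ptolemy_curve d' ` {0..1})))
       \<and> (\<forall>c. convex_curve R c \<and> c ` {0..1} \<subseteq> Tset (e1 R) (e2 R) \<longrightarrow>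
            (\<exists>d. ptolemy_interval d \<and> d 0 1 = R \<and>
                 eq_mod_refl (ptolemy_curve d ` {0..1}) (c ` {0..1})))"
proof (intro conjI allI impI)
  fix d assume H: "ptolemy_interval d \<and> d 0 1 = R"
  then show "convex_curve R (ptolemy_curve d)" using P_convex_curve[of d] by simp
  show "ptolemy_curve d ` {0..1} \<subseteq> Tset (e1 R) (e2 R)"
    using P_T[of d] H by blast
next
  fix d d' assume H: "ptolemy_interval d \<and> d 0 1 = R \<and> ptolemy_interval d' \<and> d' 0 1 = R"
  then have P: "ptolemy_interval d" and P': "ptolemy_interval d'" and R: "d 0 1 = d' 0 1" by simp_all
  show "isometric_intervals d d' \<longleftrightarrow> eq_mod_refl (ptolemy_curve d ` {0..1}) (ptolemy_curve d' ` {0..1})"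
  proof
    assume "isometric_intervals d d'"
    then show "eq_mod_refl (ptolemy_curve d ` {0..1}) (ptolemy_curve d' ` {0..1})"
      by (rule iso_imp_image[OF P P'])
  next
    assume "eq_mod_refl (ptolemy_curve d ` {0..1}) (ptolemy_curve d' ` {0..1})"
    then consider (A) "ptolemy_curve d ` {0..1} = ptolemy_curve d' ` {0..1}"
      | (B) "ptolemy_curve d ` {0..1} = swap_refl ` ptolemy_curve d' ` {0..1}"
      unfolding eq_mod_refl_def by blast
    then show "isometric_intervals d d'"
    proof cases
      case A
      show ?thesis by (rule iso_from_image[OF P P' R A]) simp
    next
      case B
      have "swap_refl ` ptolemy_curve d ` {0..1} = swap_refl ` swap_refl ` ptolemy_curve d' ` {0..1}"
        using B by simp
      then have "(\<lambda>x. swap_refl (ptolemy_curve d x)) ` {0..1} = ptolemy_curve d' ` {0..1}"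
        by (simp add: image_image)
      then show ?thesis
        by (rule iso_from_image[OF P P' R]) (simp add: det2_swap_refl)
    qed
  qed
next
  fix c assume H: "convex_curve R c \<and> c ` {0..1} \<subseteq> Tset (e1 R) (e2 R)"
  have gc: "good_curve R c" and cv: "convex (Omg c)" using convex_curve_good[of R c] H assms by auto
  have inT: "c ` {0..1} \<subseteq> Tset (e1 R) (e2 R)" using H by simp
  show "\<exists>d. ptolemy_interval d \<and> d 0 1 = R \<and> eq_mod_refl (ptolemy_curve d ` {0..1}) (c ` {0..1})"
    using dd_ptolemy[OF gc inT cv] dd01[OF gc inT cv] dd_image[OF gc inT cv]
    unfolding eq_mod_refl_def by blast
qed

end
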